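(* Let $n\geq 1$. Let $T_n$ be the set of triply rooted trees on $[n]=\{1,\dots,n\}$, and let $Q_n$ be the set of triples $(D,D',D'')$ of doubly rooted trees such that the vertex sets of $D$, $D'$, $D''$ form a composition of $[n]$ and $D$ is nonempty. Then there is a bijection between $Q_n$ and $T_n$.
   Context: A doubly rooted tree on a finite set $S$ is a labeled tree with vertex set $S$ together with two distinguished vertices $r_1$ (the first root) and $r_2$ (the second root), not necessarily distinct. A triply rooted tree on $S$ is a labeled tree with vertex set $S$ together with three distinguished vertices $r_1,r_2,r_3$ (first, second, third root), not necessarily distinct. The empty doubly rooted tree (on the empty vertex set) is allowed. A triple $(X,Y,Z)$ of subsets of a set $S$ is a composition of $S$ if $X,Y,Z$ are pairwise disjoint and $X\cup Y\cup Z=S$ (some of them may be empty). *)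

theory Defs
  imports Main
begin

definition edge_rel :: "'a set set \<Rightarrow> ('a \<times> 'a) set" where
  "edge_rel E = {(x, y). {x, y} \<in> E}"

definition is_graph :: "'a set \<Rightarrow> 'a set set \<Rightarrow> bool" where
  "is_graph V E \<longleftrightarrow> (\<forall>e\<in>E. \<exists>x y. e = {x, y} \<and> x \<noteq> y \<and> x \<in> V \<and> y \<in> V)"

definition connected_graph :: "'a set \<Rightarrow> 'a set set \<Rightarrow> bool" where
  "connected_graph V E \<longleftrightarrow> (\<forall>x\<in>V. \<forall>y\<in>V. (x, y) \<in> (edge_rel E)\<^sup>*)"

text \<open>Acyclic: no edge lies on a cycle, i.e. deleting an edge disconnects its endpoints.\<close>
definition acyclic_graph :: "'a set set \<Rightarrow> bool" where
  "acyclic_graph E \<longleftrightarrow> (\<forall>x y. {x, y} \<in> E \<longrightarrow> (x, y) \<notin> (edge_rel (E - {{x, y}}))\<^sup>*)"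

definition is_tree :: "'a set \<Rightarrow> 'a set set \<Rightarrow> bool" where
  "is_tree V E \<longleftrightarrow> finite V \<and> V \<noteq> {} \<and> is_graph V E \<and> connected_graph V E \<and> acyclic_graph E"

definition doubly_rooted_tree :: "'a set \<times> 'a set set \<times> ('a \<times> 'a) option \<Rightarrow> bool" where
  "doubly_rooted_tree D \<longleftrightarrow> (case D of (V, E, R) \<Rightarrow>
     (V = {} \<and> E = {} \<and> R = None) \<or>
     (is_tree V E \<and> (\<exists>r1 r2. R = Some (r1, r2) \<and> r1 \<in> V \<and> r2 \<in> V)))"

definition vertices :: "'a set \<times> 'a set set \<times> ('a \<times> 'a) option \<Rightarrow> 'a set" where
  "vertices D = fst D"

definition is_composition :: "'a set \<Rightarrow> 'a set \<Rightarrow> 'a set \<Rightarrow> 'a set \<Rightarrow> bool" where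
  "is_composition X Y Z S \<longleftrightarrow> X \<inter> Y = {} \<and> X \<inter> Z = {} \<and> Y \<inter> Z = {} \<and> X \<union> Y \<union> Z = S"

definition T :: "nat \<Rightarrow> (nat set set \<times> nat \<times> nat \<times> nat) set" where
  "T n = {(E, r1, r2, r3). is_tree {1..n} E \<and> r1 \<in> {1..n} \<and> r2 \<in> {1..n} \<and> r3 \<in> {1..n}}"

type_synonym drt = "nat set \<times> nat set set \<times> (nat \<times> nat) option"

definition Q :: "nat \<Rightarrow> (drt \<times> drt \<times> drt) set" where
  "Q n = {(D, D', D''). doubly_rooted_tree D \<and> doubly_rooted_tree D' \<and> doubly_rooted_tree D''
      \<and> is_composition (vertices D) (vertices D') (vertices D'') {1..n}
      \<and> vertices D \<noteq> {}}"

end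

theory Submission
  imports Defs
begin


definition conn :: "'a set set \<Rightarrow> 'a \<Rightarrow> 'a \<Rightarrow> bool" where
  "conn E x y \<longleftrightarrow> (x, y) \<in> (edge_rel E)\<^sup>*"

definition side :: "'a set set \<Rightarrow> 'a \<Rightarrow> 'a \<Rightarrow> 'a set" where
  "side G w u = {z. conn (G - {{w, u}}) u z}"

definition restr :: "'a set set \<Rightarrow> 'a set \<Rightarrow> 'a set set" where
  "restr E A = {e \<in> E. e \<subseteq> A}"

lemma conn_refl[simp]: "conn E x x" by (simp add: conn_def)

lemma conn_edge: "{x, y} \<in> E \<Longrightarrow> conn E x y"
  by (auto simp: conn_def edge_rel_def)

lemma conn_trans: "conn E x y \<Longrightarrow> conn E y z \<Longrightarrow> conn E x z"
  by (auto simp: conn_def)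

lemma conn_sym: "conn E x y \<Longrightarrow> conn E y x"
proof -
  have "sym (edge_rel E)" by (auto simp: sym_def edge_rel_def insert_commute)
  hence "sym ((edge_rel E)\<^sup>*)" by (rule sym_rtrancl)
  thus "conn E x y \<Longrightarrow> conn E y x" by (auto simp: conn_def sym_def)
qed

lemma conn_mono: "E \<subseteq> E' \<Longrightarrow> conn E x y \<Longrightarrow> conn E' x y"
proof -
  assume "E \<subseteq> E'"
  hence "edge_rel E \<subseteq> edge_rel E'" by (auto simp: edge_rel_def)
  thus "conn E x y \<Longrightarrow> conn E' x y" unfolding conn_def using rtrancl_mono by blast
qed

lemma conn_induct[consumes 1, case_names refl step]:
  assumes "conn E x z" "P x"
    "\<And>y z. conn E x y \<Longrightarrow> {y, z} \<in> E \<Longrightarrow> P y \<Longrightarrow> P z"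
  shows "P z"
  using assms(1) unfolding conn_def
proof (induction rule: rtrancl_induct)
  case base then show ?case using assms(2) by simp
next
  case (step y z) then show ?case using assms(3)[of y z] by (auto simp: conn_def edge_rel_def)
qed

lemma conn_avoid:
  assumes "conn H x z" "c \<in> e" "\<not> conn H x c"
  shows "conn (H - {e}) x z"
  using assms(1)
proof (induction rule: conn_induct)
  case refl then show ?case by simp
next
  case (step y z)
  have "conn H x z" using step(1) conn_edge[OF step(2)] conn_trans by metis
  hence "{y, z} \<noteq> e" using step(1) assms(2,3) by auto
  hence "{y, z} \<in> H - {e}" using step(2) by auto
  then show ?case using step(3) conn_edge conn_trans by metis
qed

lemma conn_stay:
  assumes "conn H x z" "x \<in> A" "\<And>y z. {y, z} \<in> H \<Longrightarrow> y \<in> A \<Longrightarrow> z \<in> A"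
  shows "z \<in> A"
  using assms(1)
proof (induction rule: conn_induct)
  case refl then show ?case using assms(2) .
next
  case (step y z) then show ?case using assms(3)[of y z] by simp
qed

lemma tree_edge:
  assumes "is_tree S G" "{x, y} \<in> G"
  shows "x \<noteq> y \<and> x \<in> S \<and> y \<in> S"
proof -
  obtain a b where "{x, y} = {a, b}" "a \<noteq> b" "a \<in> S" "b \<in> S"
    using assms unfolding is_tree_def is_graph_def by blast
  then show ?thesis by (auto simp: doubleton_eq_iff)
qed

lemma tree_edge_form:
  assumes "is_tree S G" "e \<in> G"
  shows "\<exists>x y. e = {x, y} \<and> x \<noteq> y \<and> x \<in> S \<and> y \<in> S"
  using assms unfolding is_tree_def is_graph_def by blast

lemma conn_in_S:
  assumes "is_tree S G" "conn H x z" "x \<in> S" "H \<subseteq> G"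
  shows "z \<in> S"
proof (rule conn_stay[OF assms(2,3)])
  fix y z assume "{y, z} \<in> H" "y \<in> S"
  hence "{y, z} \<in> G" using assms(4) by blast
  thus "z \<in> S" using tree_edge[OF assms(1)] by simp
qed

lemma side_disj:
  assumes "is_tree S G" "{w, u} \<in> G"
  shows "side G w u \<inter> side G u w = {}"
proof (rule ccontr)
  assume "side G w u \<inter> side G u w \<noteq> {}"
  then obtain z where "conn (G - {{w,u}}) u z" "conn (G - {{u,w}}) w z"
    unfolding side_def by blast
  moreover have "{u,w} = {w,u}" by (rule insert_commute)
  ultimately have "conn (G - {{w,u}}) u z" "conn (G - {{w,u}}) w z" by simp_all
  hence "conn (G - {{w,u}}) w u" using conn_sym conn_trans by metis
  thus False using assms unfolding is_tree_def acyclic_graph_def conn_def by blast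
qed

lemma side_self: "u \<in> side G w u" by (simp add: side_def)

lemma side_cover:
  assumes "is_tree S G" "{w, u} \<in> G" "z \<in> S"
  shows "z \<in> side G w u \<or> z \<in> side G u w"
proof -
  have e: "G - {{u,w}} = G - {{w,u}}" by (simp add: insert_commute)
  have sd: "side G u w = {z. conn (G - {{w,u}}) w z}" unfolding side_def e ..
  have "w \<in> S" using tree_edge[OF assms(1,2)] by blast
  hence "conn G w z" using assms unfolding is_tree_def connected_graph_def conn_def by blast
  thus ?thesis
  proof (induction rule: conn_induct)
    case refl then show ?case using side_self[of w G u] by blast
  next
    case (step y z)
    show ?case
    proof (cases "{y, z} = {w, u}")
      case True
      hence "z = w \<or> z = u" by (auto simp: doubleton_eq_iff)
      thus ?thesis using side_self[of u G w] side_self[of w G u] by blast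
    next
      case False
      hence ed: "{y, z} \<in> G - {{w,u}}" using step(2) by auto
      from step(3) show ?thesis
      proof
        assume "y \<in> side G w u"
        hence "conn (G - {{w,u}}) u y" by (simp add: side_def)
        hence "conn (G - {{w,u}}) u z" by (rule conn_trans[OF _ conn_edge[OF ed]])
        thus ?thesis by (simp add: side_def)
      next
        assume "y \<in> side G u w"
        hence "conn (G - {{w,u}}) w y" by (simp add: sd)
        hence "conn (G - {{w,u}}) w z" by (rule conn_trans[OF _ conn_edge[OF ed]])
        thus ?thesis by (simp add: sd)
      qed
    qed
  qed
qed

lemma side_sub_S:
  assumes "is_tree S G" "{w, u} \<in> G"
  shows "side G w u \<subseteq> S"
proof
  fix z assume "z \<in> side G w u"
  hence c: "conn (G - {{w,u}}) u z" by (simp add: side_def)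
  have "u \<in> S" using tree_edge[OF assms(1,2)] by blast
  show "z \<in> S" by (rule conn_in_S[OF assms(1) c \<open>u \<in> S\<close>]) blast
qed

lemma nb_exists:
  assumes "is_tree S G" "w \<in> S" "z \<in> S" "z \<noteq> w"
  shows "\<exists>u. {w, u} \<in> G \<and> z \<in> side G w u"
proof -
  have "conn G w z" using assms unfolding is_tree_def connected_graph_def conn_def by blast
  then have "z = w \<or> (\<exists>u. {w, u} \<in> G \<and> z \<in> side G w u)"
  proof (induction rule: conn_induct)
    case refl then show ?case by simp
  next
    case (step y z)
    from step(3) show ?case
    proof
      assume "y = w"
      hence "{w, z} \<in> G" using step(2) by simp
      thus ?thesis using side_self[of z G w] by blast
    next
      assume "\<exists>u. {w, u} \<in> G \<and> y \<in> side G w u"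
      then obtain u where u: "{w, u} \<in> G" "y \<in> side G w u" by blast
      show ?thesis
      proof (cases "{y, z} = {w, u}")
        case True
        then show ?thesis using u by (auto simp: doubleton_eq_iff side_self)
      next
        case False
        hence "{y, z} \<in> G - {{w,u}}" using step(2) by auto
        hence "z \<in> side G w u" using u(2) conn_edge conn_trans unfolding side_def by (metis mem_Collect_eq)
        then show ?thesis using u by blast
      qed
    qed
  qed
  thus ?thesis using assms(4) by blast
qed

lemma side_nb_disj:
  assumes "is_tree S G" "{v, p} \<in> G" "{v, s} \<in> G" "p \<noteq> s"
  shows "side G v p \<inter> side G v s = {}"
proof (rule ccontr)
  assume "side G v p \<inter> side G v s \<noteq> {}"
  then obtain z where z1: "conn (G - {{v,p}}) p z" and z2: "z \<in> side G v s" by (auto simp: side_def)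
  have "v \<in> side G p v" by (rule side_self)
  hence "v \<notin> side G v p" using side_disj[OF assms(1), of p v] assms(2) by (auto simp: insert_commute)
  hence "\<not> conn (G - {{v,p}}) p v" by (simp add: side_def)
  hence "conn (G - {{v,p}} - {{v,s}}) p z" using conn_avoid[OF z1, of v "{v,s}"] by simp
  hence "conn (G - {{v,s}}) p z" by (rule conn_mono[rotated]) auto
  moreover have "{v, p} \<in> G - {{v,s}}" using assms by (auto simp: doubleton_eq_iff)
  ultimately have "conn (G - {{v,s}}) v z" using conn_edge conn_trans by metis
  hence "z \<in> side G s v" by (simp add: side_def insert_commute)
  thus False using z2 side_disj[OF assms(1,3)] by blast
qed

lemma side_sub_step:
  assumes "is_tree S G" "{w, u} \<in> G" "{u, u'} \<in> G" "u' \<noteq> w"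
  shows "side G u u' \<subseteq> side G w u" "u \<notin> side G u u'"
proof -
  have "u \<in> side G u' u" by (rule side_self)
  thus nu: "u \<notin> side G u u'" using side_disj[OF assms(1,3)] by blast
  have uw: "u \<noteq> w" using tree_edge[OF assms(1,2)] by blast
  show "side G u u' \<subseteq> side G w u"
  proof
    fix z assume "z \<in> side G u u'"
    hence z: "conn (G - {{u,u'}}) u' z" by (simp add: side_def)
    have "\<not> conn (G - {{u,u'}}) u' u" using nu by (simp add: side_def)
    hence "conn (G - {{u,u'}} - {{w,u}}) u' z" using conn_avoid[OF z, of u "{w,u}"] by simp
    hence "conn (G - {{w,u}}) u' z" by (rule conn_mono[rotated]) auto
    moreover have "{u, u'} \<in> G - {{w,u}}" using assms uw by (auto simp: doubleton_eq_iff)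
    ultimately have "conn (G - {{w,u}}) u z" using conn_edge conn_trans by metis
    thus "z \<in> side G w u" by (simp add: side_def)
  qed
qed


lemma tree_conn: "is_tree V E \<Longrightarrow> x \<in> V \<Longrightarrow> y \<in> V \<Longrightarrow> conn E x y"
  unfolding is_tree_def connected_graph_def conn_def by blast

lemma tree_acyc: "is_tree V E \<Longrightarrow> {x, y} \<in> E \<Longrightarrow> \<not> conn (E - {{x, y}}) x y"
  unfolding is_tree_def acyclic_graph_def conn_def by blast

lemma tree_fin: "is_tree V E \<Longrightarrow> finite V"
  unfolding is_tree_def by blast

lemma tree_intro:
  assumes "finite V" "V \<noteq> {}" "\<And>e. e \<in> E \<Longrightarrow> \<exists>x y. e = {x, y} \<and> x \<noteq> y \<and> x \<in> V \<and> y \<in> V"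
    "\<And>x y. x \<in> V \<Longrightarrow> y \<in> V \<Longrightarrow> conn E x y"
    "\<And>x y. {x, y} \<in> E \<Longrightarrow> \<not> conn (E - {{x, y}}) x y"
  shows "is_tree V E"
  using assms unfolding is_tree_def is_graph_def connected_graph_def acyclic_graph_def conn_def by blast



lemma cls_swap:
  assumes "\<forall>e\<in>G. e \<subseteq> A \<or> e \<subseteq> B \<or> e = {c, d}"
  shows "\<forall>e\<in>G. e \<subseteq> B \<or> e \<subseteq> A \<or> e = {d, c}"
proof
  fix e assume "e \<in> G"
  hence "e \<subseteq> A \<or> e \<subseteq> B \<or> e = {c, d}" using assms by blast
  moreover have "{c, d} = {d, c}" by (rule insert_commute)
  ultimately show "e \<subseteq> B \<or> e \<subseteq> A \<or> e = {d, c}" by blast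
qed

lemma cls_edge:
  assumes disj: "A \<inter> B = {}" and cls: "\<forall>e\<in>G. e \<subseteq> A \<or> e \<subseteq> B \<or> e = br"
    and e: "{y, z} \<in> G" "{y, z} \<noteq> br"
  shows "y \<in> A \<Longrightarrow> z \<in> A" "y \<in> B \<Longrightarrow> z \<in> B"
     "y \<in> A \<Longrightarrow> {y, z} \<subseteq> A" "y \<in> B \<Longrightarrow> {y, z} \<subseteq> B"
proof -
  have "{y, z} \<subseteq> A \<or> {y, z} \<subseteq> B \<or> {y, z} = br" using cls e(1) by (rule bspec)
  hence "{y, z} \<subseteq> A \<or> {y, z} \<subseteq> B" using e(2) by (simp only: simp_thms)
  thus "y \<in> A \<Longrightarrow> z \<in> A" "y \<in> B \<Longrightarrow> z \<in> B"
     "y \<in> A \<Longrightarrow> {y, z} \<subseteq> A" "y \<in> B \<Longrightarrow> {y, z} \<subseteq> B" using disj by (auto simp del: insert_subset)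
qed

lemma stay_part:
  assumes disj: "A \<inter> B = {}" and cls: "\<forall>e\<in>G. e \<subseteq> A \<or> e \<subseteq> B \<or> e = {c, d}"
    and cn: "conn (G - {{c,d}}) x z"
  shows "x \<in> A \<Longrightarrow> z \<in> A" "x \<in> B \<Longrightarrow> z \<in> B"
proof -
  show "x \<in> A \<Longrightarrow> z \<in> A"
  proof (rule conn_stay[OF cn])
    fix y z assume a: "{y, z} \<in> G - {{c,d}}" "y \<in> A"
    thus "z \<in> A" using cls_edge[OF disj cls] by blast
  qed
  show "x \<in> B \<Longrightarrow> z \<in> B"
  proof (rule conn_stay[OF cn])
    fix y z assume a: "{y, z} \<in> G - {{c,d}}" "y \<in> B"
    thus "z \<in> B" using cls_edge[OF disj cls] by blast
  qed
qed

lemma within_part: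
  assumes disj: "A \<inter> B = {}" and cls: "\<forall>e\<in>G. e \<subseteq> A \<or> e \<subseteq> B \<or> e = {c, d}"
    and cn: "conn (G - {{c,d}}) x z" and x: "x \<in> A"
  shows "conn (restr G A) x z"
  using cn
proof (induction rule: conn_induct)
  case refl then show ?case by simp
next
  case (step y z)
  have "y \<in> A" using stay_part(1)[OF disj cls step(1) x] .
  moreover have "{y, z} \<in> G" "{y, z} \<noteq> {c, d}" using step(2) by auto
  ultimately have "{y, z} \<subseteq> A" using cls_edge(3)[OF disj cls] by blast
  hence "{y, z} \<in> restr G A" using step(2) by (simp add: restr_def)
  thus ?case by (rule conn_trans[OF step(3) conn_edge])
qed

lemma proj_conn:
  assumes disj: "A \<inter> B = {}" and cA: "c \<in> A" and dB: "d \<in> B"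
    and cls: "\<forall>e\<in>G. e \<subseteq> A \<or> e \<subseteq> B \<or> e = {c, d}"
    and e0: "e0 \<subseteq> A" and cn: "conn (G - {e0}) x z" and x: "x \<in> A"
  shows "conn (restr G A - {e0}) x (if z \<in> A then z else c)"
  using cn
proof (induction rule: conn_induct)
  case refl then show ?case using x by simp
next
  case (step a b)
  have ab: "{a, b} \<in> G" "{a, b} \<noteq> e0" using step(2) by auto
  from cls ab(1) have "{a, b} \<subseteq> A \<or> {a, b} \<subseteq> B \<or> {a, b} = {c, d}" by (rule bspec)
  then show ?case
  proof (elim disjE)
    assume h: "{a, b} \<subseteq> A"
    hence "{a, b} \<in> restr G A - {e0}" using ab by (simp add: restr_def)
    moreover have "a \<in> A" "b \<in> A" using h by auto
    ultimately show ?thesis using conn_trans[OF step(3) conn_edge] by simp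
  next
    assume "{a, b} \<subseteq> B"
    hence "a \<notin> A" "b \<notin> A" using disj by auto
    thus ?thesis using step(3) by simp
  next
    assume "{a, b} = {c, d}"
    hence "(a = c \<and> b = d) \<or> (a = d \<and> b = c)" by (auto simp: doubleton_eq_iff)
    moreover have "d \<notin> A" using dB disj by auto
    ultimately show ?thesis using step(3) cA by auto
  qed
qed

lemma acyclic_mono: "E' \<subseteq> E \<Longrightarrow> acyclic_graph E \<Longrightarrow> acyclic_graph E'"
  unfolding acyclic_graph_def
proof (intro allI impI)
  fix x y assume "E' \<subseteq> E" "\<forall>x y. {x, y} \<in> E \<longrightarrow> (x, y) \<notin> (edge_rel (E - {{x, y}}))\<^sup>*" "{x, y} \<in> E'"
  moreover have "E' - {{x,y}} \<subseteq> E - {{x,y}}" using calculation(1) by blast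
  ultimately show "(x, y) \<notin> (edge_rel (E' - {{x, y}}))\<^sup>*"
    using conn_mono[of "E' - {{x,y}}" "E - {{x,y}}" x y] unfolding conn_def by blast
qed

lemma tree_part:
  assumes disj: "A \<inter> B = {}" and cA: "c \<in> A" and dB: "d \<in> B" and br: "{c, d} \<in> G"
    and cls: "\<forall>e\<in>G. e \<subseteq> A \<or> e \<subseteq> B \<or> e = {c, d}"
    and t: "is_tree (A \<union> B) G"
  shows "is_tree A (restr G A)"
proof (rule tree_intro)
  show "finite A" using tree_fin[OF t] by simp
  show "A \<noteq> {}" using cA by blast
  show "\<exists>x y. e = {x, y} \<and> x \<noteq> y \<and> x \<in> A \<and> y \<in> A" if "e \<in> restr G A" for e
  proof -
    have "e \<in> G" "e \<subseteq> A" using that by (auto simp: restr_def)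
    then obtain x y where "e = {x, y}" "x \<noteq> y" using tree_edge_form[OF t] by blast
    thus ?thesis using \<open>e \<subseteq> A\<close> by blast
  qed
  have cc: "conn (restr G A) c x" if "x \<in> A" for x
  proof -
    have "x \<in> A \<union> B" using that by simp
    from side_cover[OF t br this] show ?thesis
    proof
      assume "x \<in> side G c d"
      hence "conn (G - {{c,d}}) d x" by (simp add: side_def)
      hence "x \<in> B" by (rule stay_part(2)[OF disj cls _ dB])
      thus ?thesis using that disj by blast
    next
      assume "x \<in> side G d c"
      hence "conn (G - {{d,c}}) c x" by (simp add: side_def)
      moreover have "{d, c} = {c, d}" by (rule insert_commute)
      ultimately have "conn (G - {{c,d}}) c x" by simp
      thus ?thesis by (rule within_part[OF disj cls _ cA])
    qed
  qed
  show "conn (restr G A) x y" if "x \<in> A" "y \<in> A" for x y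
    using cc[OF that(1)] cc[OF that(2)] conn_sym conn_trans by metis
  show "\<not> conn (restr G A - {{x, y}}) x y" if "{x, y} \<in> restr G A" for x y
  proof
    assume "conn (restr G A - {{x, y}}) x y"
    moreover have "restr G A - {{x, y}} \<subseteq> G - {{x,y}}" by (auto simp: restr_def)
    ultimately have "conn (G - {{x, y}}) x y" by (rule conn_mono[rotated])
    moreover have "{x, y} \<in> G" using that by (simp add: restr_def)
    ultimately show False using tree_acyc[OF t] by blast
  qed
qed

lemma tree_glue:
  assumes disj: "A \<inter> B = {}" and cA: "c \<in> A" and dB: "d \<in> B" and br: "{c, d} \<in> G"
    and cls: "\<forall>e\<in>G. e \<subseteq> A \<or> e \<subseteq> B \<or> e = {c, d}"
    and tA: "is_tree A (restr G A)" and tB: "is_tree B (restr G B)"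
  shows "is_tree (A \<union> B) G"
proof (rule tree_intro)
  have cls2: "\<forall>e\<in>G. e \<subseteq> B \<or> e \<subseteq> A \<or> e = {d, c}" using cls_swap[OF cls] .
  have disj2: "B \<inter> A = {}" using disj by blast
  show "finite (A \<union> B)" using tree_fin[OF tA] tree_fin[OF tB] by simp
  show "A \<union> B \<noteq> {}" using cA by blast
  show "\<exists>x y. e = {x, y} \<and> x \<noteq> y \<and> x \<in> A \<union> B \<and> y \<in> A \<union> B" if e: "e \<in> G" for e
  proof -
    from cls e have "e \<subseteq> A \<or> e \<subseteq> B \<or> e = {c, d}" by (rule bspec)
    thus ?thesis
    proof (elim disjE)
      assume "e \<subseteq> A" hence "e \<in> restr G A" using e by (simp add: restr_def)
      then obtain x y where "e = {x, y} \<and> x \<noteq> y \<and> x \<in> A \<and> y \<in> A" using tree_edge_form[OF tA] by blast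
      thus ?thesis by blast
    next
      assume "e \<subseteq> B" hence "e \<in> restr G B" using e by (simp add: restr_def)
      then obtain x y where "e = {x, y} \<and> x \<noteq> y \<and> x \<in> B \<and> y \<in> B" using tree_edge_form[OF tB] by blast
      thus ?thesis by blast
    next
      assume "e = {c, d}"
      moreover have "c \<noteq> d" using cA dB disj by blast
      ultimately show ?thesis using cA dB by blast
    qed
  qed
  have cc: "conn G c x" if "x \<in> A \<union> B" for x
  proof (cases "x \<in> A")
    case True
    hence "conn (restr G A) c x" using tree_conn[OF tA cA] by blast
    thus ?thesis by (rule conn_mono[rotated]) (auto simp: restr_def)
  next
    case False
    hence "x \<in> B" using that by blast
    hence "conn (restr G B) d x" using tree_conn[OF tB dB] by blast
    hence "conn G d x" by (rule conn_mono[rotated]) (auto simp: restr_def)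
    thus ?thesis by (rule conn_trans[OF conn_edge[OF br]])
  qed
  show "conn G x y" if "x \<in> A \<union> B" "y \<in> A \<union> B" for x y
    using cc[OF that(1)] cc[OF that(2)] conn_sym conn_trans by metis
  show "\<not> conn (G - {{x, y}}) x y" if xy: "{x, y} \<in> G" for x y
  proof
    assume cn: "conn (G - {{x,y}}) x y"
    from cls xy have "{x, y} \<subseteq> A \<or> {x, y} \<subseteq> B \<or> {x, y} = {c, d}" by (rule bspec)
    thus False
    proof (elim disjE)
      assume h: "{x, y} \<subseteq> A"
      have "x \<in> A" "y \<in> A" using h by auto
      have "conn (restr G A - {{x,y}}) x (if y \<in> A then y else c)"
        by (rule proj_conn[OF disj cA dB cls h cn \<open>x \<in> A\<close>])
      hence "conn (restr G A - {{x,y}}) x y" using \<open>y \<in> A\<close> by simp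
      moreover have "{x, y} \<in> restr G A" using h xy by (simp add: restr_def)
      ultimately show False using tree_acyc[OF tA] by blast
    next
      assume h: "{x, y} \<subseteq> B"
      have "x \<in> B" "y \<in> B" using h by auto
      have "conn (restr G B - {{x,y}}) x (if y \<in> B then y else d)"
        by (rule proj_conn[OF disj2 dB cA cls2 h cn \<open>x \<in> B\<close>])
      hence "conn (restr G B - {{x,y}}) x y" using \<open>y \<in> B\<close> by simp
      moreover have "{x, y} \<in> restr G B" using h xy by (simp add: restr_def)
      ultimately show False using tree_acyc[OF tB] by blast
    next
      assume h: "{x, y} = {c, d}"
      hence "(x = c \<and> y = d) \<or> (x = d \<and> y = c)" by (auto simp: doubleton_eq_iff)
      thus False
      proof
        assume "x = c \<and> y = d"
        hence "conn (G - {{c,d}}) c d" using cn by simp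
        hence "d \<in> A" using stay_part(1)[OF disj cls] cA by blast
        thus False using dB disj by blast
      next
        assume xy2: "x = d \<and> y = c"
        have "{d, c} = {c, d}" by (rule insert_commute)
        hence "conn (G - {{c,d}}) d c" using cn xy2 by simp
        hence "c \<in> B" using stay_part(2)[OF disj cls] dB by blast
        thus False using cA disj by blast
      qed
    qed
  qed
qed

lemma side_part:
  assumes disj: "A \<inter> B = {}" and cA: "c \<in> A" and dB: "d \<in> B"
    and cls: "\<forall>e\<in>G. e \<subseteq> A \<or> e \<subseteq> B \<or> e = {c, d}"
    and tB: "is_tree B (restr G B)"
  shows "side G c d = B"
proof
  show "side G c d \<subseteq> B"
  proof
    fix z assume "z \<in> side G c d"
    hence "conn (G - {{c,d}}) d z" by (simp add: side_def)
    thus "z \<in> B" by (rule stay_part(2)[OF disj cls _ dB])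
  qed
  show "B \<subseteq> side G c d"
  proof
    fix z assume "z \<in> B"
    hence "conn (restr G B) d z" using tree_conn[OF tB dB] by blast
    moreover have "restr G B \<subseteq> G - {{c,d}}"
    proof
      fix e assume "e \<in> restr G B"
      moreover have "c \<notin> B" using cA disj by blast
      ultimately show "e \<in> G - {{c,d}}" by (auto simp: restr_def)
    qed
    ultimately have "conn (G - {{c,d}}) d z" by (rule conn_mono[rotated])
    thus "z \<in> side G c d" by (simp add: side_def)
  qed
qed



definition cnt :: "'a \<Rightarrow> 'a \<Rightarrow> 'a \<Rightarrow> 'a set \<Rightarrow> nat" where
  "cnt r1 r2 r3 A = (if r1 \<in> A then 1 else 0) + (if r2 \<in> A then 1 else 0) + (if r3 \<in> A then 1 else 0)"

definition median :: "'a set set \<Rightarrow> 'a set \<Rightarrow> 'a \<Rightarrow> 'a \<Rightarrow> 'a \<Rightarrow> 'a \<Rightarrow> bool" where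
  "median G S r1 r2 r3 w \<longleftrightarrow> w \<in> S \<and> (\<forall>u. {w, u} \<in> G \<longrightarrow> cnt r1 r2 r3 (side G w u) \<le> 1)"

lemma cnt_disj: "A \<inter> B = {} \<Longrightarrow> cnt r1 r2 r3 A + cnt r1 r2 r3 B \<le> 3"
  unfolding cnt_def by (auto split: if_splits)

lemma cnt_cover: "r1 \<in> A \<union> B \<Longrightarrow> r2 \<in> A \<union> B \<Longrightarrow> r3 \<in> A \<union> B \<Longrightarrow> cnt r1 r2 r3 A + cnt r1 r2 r3 B \<ge> 3"
  unfolding cnt_def by (auto split: if_splits)

lemma median_exists:
  assumes t: "is_tree S G" and r: "r1 \<in> S" "r2 \<in> S" "r3 \<in> S"
  shows "\<exists>w. median G S r1 r2 r3 w"
proof -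
  have key: "\<exists>m. median G S r1 r2 r3 m" if "{w, u} \<in> G" "2 \<le> cnt r1 r2 r3 (side G w u)" for w u
    using that
  proof (induction "card (side G w u)" arbitrary: w u rule: less_induct)
    case less
    show ?case
    proof (cases "median G S r1 r2 r3 u")
      case True thus ?thesis by blast
    next
      case False
      have uS: "u \<in> S" using tree_edge[OF t less.prems(1)] by blast
      with False obtain u' where u': "{u, u'} \<in> G" "\<not> cnt r1 r2 r3 (side G u u') \<le> 1"
        unfolding median_def by blast
      have "u' \<noteq> w"
      proof
        assume "u' = w"
        have "side G w u \<inter> side G u w = {}" by (rule side_disj[OF t less.prems(1)])
        hence "cnt r1 r2 r3 (side G w u) + cnt r1 r2 r3 (side G u w) \<le> 3" by (rule cnt_disj)
        moreover have "\<not> cnt r1 r2 r3 (side G u w) \<le> 1" using u'(2) \<open>u' = w\<close> by simp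
        ultimately show False using less.prems(2) by linarith
      qed
      have sub: "side G u u' \<subseteq> side G w u" "u \<notin> side G u u'"
        using side_sub_step[OF t less.prems(1) u'(1) \<open>u' \<noteq> w\<close>] by auto
      have "u \<in> side G w u" by (rule side_self)
      hence psub: "side G u u' \<subset> side G w u" using sub by blast
      have "finite (side G w u)" using side_sub_S[OF t less.prems(1)] tree_fin[OF t] finite_subset by blast
      hence "card (side G u u') < card (side G w u)" using psub by (rule psubset_card_mono)
      moreover have "2 \<le> cnt r1 r2 r3 (side G u u')" using u'(2) by linarith
      ultimately show ?thesis using less.hyps u'(1) by blast
    qed
  qed
  show ?thesis
  proof (cases "median G S r1 r2 r3 r1")
    case True thus ?thesis by blast
  next
    case False
    then obtain u where "{r1, u} \<in> G" "\<not> cnt r1 r2 r3 (side G r1 u) \<le> 1"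
      using r unfolding median_def by blast
    moreover hence "2 \<le> cnt r1 r2 r3 (side G r1 u)" by linarith
    ultimately show ?thesis using key by blast
  qed
qed

lemma median_unique:
  assumes t: "is_tree S G" and r: "r1 \<in> S" "r2 \<in> S" "r3 \<in> S"
    and m1: "median G S r1 r2 r3 w" and m2: "median G S r1 r2 r3 w'"
  shows "w = w'"
proof (rule ccontr)
  assume ne: "w \<noteq> w'"
  have wS: "w \<in> S" "w' \<in> S" using m1 m2 by (auto simp: median_def)
  obtain u where u: "{w, u} \<in> G" "w' \<in> side G w u" using nb_exists[OF t wS(1) wS(2)] ne by metis
  obtain u' where u': "{w', u'} \<in> G" "w \<in> side G w' u'" using nb_exists[OF t wS(2) wS(1)] ne by metis
  have cov: "z \<in> side G w u \<or> z \<in> side G w' u'" if z: "z \<in> S" for z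
  proof (cases "z \<in> side G w u")
    case True thus ?thesis by blast
  next
    case False
    hence "z \<in> side G u w" using side_cover[OF t u(1) z] by blast
    moreover have e: "G - {{u,w}} = G - {{w,u}}" by (simp add: insert_commute)
    ultimately have zc: "conn (G - {{w,u}}) w z" by (simp add: side_def)
    show ?thesis
    proof (cases "{w', u'} = {w, u}")
      case True
      hence "w' = u" "u' = w" using ne by (auto simp: doubleton_eq_iff)
      thus ?thesis using \<open>z \<in> side G u w\<close> by simp
    next
      case False
      have "\<not> conn (G - {{w,u}}) w w'"
      proof
        assume "conn (G - {{w,u}}) w w'"
        hence "w' \<in> side G u w" using e by (simp add: side_def)
        thus False using u(2) side_disj[OF t u(1)] by blast
      qed
      hence "conn (G - {{w,u}} - {{w',u'}}) w z" using conn_avoid[OF zc, of w' "{w',u'}"] by simp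
      hence "conn (G - {{w',u'}}) w z" by (rule conn_mono[rotated]) auto
      moreover have "conn (G - {{w',u'}}) u' w" using u'(2) by (simp add: side_def)
      ultimately have "conn (G - {{w',u'}}) u' z" by (rule conn_trans[rotated])
      thus ?thesis by (simp add: side_def)
    qed
  qed
  have "cnt r1 r2 r3 (side G w u) + cnt r1 r2 r3 (side G w' u') \<ge> 3"
    by (rule cnt_cover) (use cov r in blast)+
  moreover have "cnt r1 r2 r3 (side G w u) \<le> 1" using m1 u(1) by (simp add: median_def)
  moreover have "cnt r1 r2 r3 (side G w' u') \<le> 1" using m2 u'(1) by (simp add: median_def)
  ultimately show False by linarith
qed

lemma nb_unique:
  assumes t: "is_tree S G" and "{v, p} \<in> G" "{v, p'} \<in> G" "x \<in> side G v p" "x \<in> side G v p'"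
  shows "p = p'"
  using side_nb_disj[OF t assms(2,3)] assms(4,5) by blast



lemma restr_Un: "restr (A \<union> B) V = restr A V \<union> restr B V"
  by (auto simp: restr_def)

lemma tree_sub: "is_tree V E \<Longrightarrow> e \<in> E \<Longrightarrow> e \<subseteq> V \<and> e \<noteq> {}"
  using tree_edge_form by fastforce

lemma restr_self: "is_tree V E \<Longrightarrow> restr E V = E"
  using tree_sub unfolding restr_def by blast

lemma restr_disj: "is_tree V E \<Longrightarrow> V \<inter> W = {} \<Longrightarrow> restr E W = {}"
proof -
  assume t: "is_tree V E" and d: "V \<inter> W = {}"
  have "False" if "e \<in> E" "e \<subseteq> W" for e
  proof -
    have "e \<subseteq> V" "e \<noteq> {}" using tree_sub[OF t that(1)] by auto
    thus False using that(2) d by blast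
  qed
  thus ?thesis unfolding restr_def by blast
qed

lemma restr_restr: "V \<subseteq> W \<Longrightarrow> restr (restr E W) V = restr E V"
  by (auto simp: restr_def)

lemma restr_bridge: "c \<notin> V \<Longrightarrow> restr {{c, d}} V = {}"
  by (auto simp: restr_def)

lemma restr_empty: "restr E {} = {} \<longleftrightarrow> {} \<notin> E"
  by (auto simp: restr_def)

lemma drt_cases:
  assumes "doubly_rooted_tree (Y, E1, R1)"
  shows "(Y = {} \<and> E1 = {} \<and> R1 = None) \<or> (\<exists>x y. R1 = Some (x, y) \<and> x \<in> Y \<and> y \<in> Y \<and> is_tree Y E1)"
  using assms unfolding doubly_rooted_tree_def by auto

lemma glue_opt:
  assumes tA: "is_tree A GA" and cA: "c \<in> A" and dr: "doubly_rooted_tree (Y, E1, R1)"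
    and disj: "A \<inter> Y = {}"
    and f: "\<And>x y. f (x, y) \<in> {x, y}"
    and G'_def: "G' = GA \<union> E1 \<union> (case R1 of None \<Rightarrow> {} | Some r \<Rightarrow> {{c, f r}})"
  shows "is_tree (A \<union> Y) G'" "restr G' A = GA" "restr G' Y = E1"
    "R1 = Some r \<Longrightarrow> side G' c (f r) = Y \<and> {c, f r} \<in> G' \<and> f r \<in> Y"
    "R1 = None \<Longrightarrow> G' = GA \<and> Y = {}"
proof -
  from drt_cases[OF dr] have "(Y = {} \<and> E1 = {} \<and> R1 = None) \<or> (\<exists>x y. R1 = Some (x, y) \<and> x \<in> Y \<and> y \<in> Y \<and> is_tree Y E1)" .
  then have "is_tree (A \<union> Y) G' \<and> restr G' A = GA \<and> restr G' Y = E1 \<and>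
    (\<forall>r. R1 = Some r \<longrightarrow> side G' c (f r) = Y \<and> {c, f r} \<in> G' \<and> f r \<in> Y) \<and>
    (R1 = None \<longrightarrow> G' = GA \<and> Y = {})"
  proof
    assume h: "Y = {} \<and> E1 = {} \<and> R1 = None"
    hence G': "G' = GA" using G'_def by simp
    have "{} \<notin> GA" using tree_sub[OF tA] by blast
    hence "restr GA {} = {}" by (simp add: restr_empty)
    thus ?thesis using h G' tA restr_self[OF tA] by simp
  next
    assume "\<exists>x y. R1 = Some (x, y) \<and> x \<in> Y \<and> y \<in> Y \<and> is_tree Y E1"
    then obtain x y where h: "R1 = Some (x, y)" "x \<in> Y" "y \<in> Y" "is_tree Y E1" by blast
    define d where "d = f (x, y)"
    have dY: "d \<in> Y" using f[of x y] h(2,3) unfolding d_def by auto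
    have G': "G' = GA \<union> E1 \<union> {{c, d}}" using G'_def h d_def by simp
    have cY: "c \<notin> Y" using cA disj by blast
    have dA: "d \<notin> A" using dY disj by blast
    have disj': "Y \<inter> A = {}" using disj by blast
    have rA: "restr G' A = GA"
      unfolding G' restr_Un restr_self[OF tA] restr_disj[OF h(4) disj']
      using restr_bridge[of d A c] dA by (simp add: insert_commute)
    have rY: "restr G' Y = E1"
      unfolding G' restr_Un restr_self[OF h(4)] restr_disj[OF tA disj] restr_bridge[OF cY] by simp
    have cls: "\<forall>e\<in>G'. e \<subseteq> A \<or> e \<subseteq> Y \<or> e = {c, d}"
      unfolding G' using tree_sub[OF tA] tree_sub[OF h(4)] by blast
    have br: "{c, d} \<in> G'" unfolding G' by blast
    have t: "is_tree (A \<union> Y) G'"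
      by (rule tree_glue[OF disj cA dY br cls]) (simp_all add: rA rY tA h(4))
    have s: "side G' c d = Y"
      by (rule side_part[OF disj cA dY cls]) (simp add: rY h(4))
    show ?thesis using t rA rY s br dY h(1) unfolding d_def by auto
  qed
  thus "is_tree (A \<union> Y) G'" "restr G' A = GA" "restr G' Y = E1"
    "R1 = Some r \<Longrightarrow> side G' c (f r) = Y \<and> {c, f r} \<in> G' \<and> f r \<in> Y"
    "R1 = None \<Longrightarrow> G' = GA \<and> Y = {}" by blast+
qed

lemma split_side:
  assumes t: "is_tree S G" and e: "{v, p} \<in> G"
  shows "side G v p \<subseteq> S" "v \<notin> side G v p" "p \<in> side G v p"
    "is_tree (side G v p) (restr G (side G v p))"
    "is_tree (S - side G v p) (restr G (S - side G v p))"
    "\<forall>e\<in>G. e \<subseteq> S - side G v p \<or> e \<subseteq> side G v p \<or> e = {v, p}"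
proof -
  let ?Y = "side G v p"
  show Ysub: "?Y \<subseteq> S" by (rule side_sub_S[OF t e])
  have "v \<in> side G p v" by (rule side_self)
  moreover have "{p, v} \<in> G" using e by (simp add: insert_commute)
  ultimately show vY: "v \<notin> ?Y" using side_disj[OF t, of p v] by blast
  show pY: "p \<in> ?Y" by (rule side_self)
  have vS: "v \<in> S" using tree_edge[OF t e] by blast
  show cls: "\<forall>e\<in>G. e \<subseteq> S - ?Y \<or> e \<subseteq> ?Y \<or> e = {v, p}"
  proof
    fix e' assume e': "e' \<in> G"
    then obtain x y where xy: "e' = {x, y}" "x \<in> S" "y \<in> S" using tree_edge_form[OF t] by blast
    show "e' \<subseteq> S - ?Y \<or> e' \<subseteq> ?Y \<or> e' = {v, p}"
    proof (cases "e' = {v, p}")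
      case True thus ?thesis by blast
    next
      case False
      hence ed: "{x, y} \<in> G - {{v,p}}" using e' xy by auto
      have ed2: "{y, x} \<in> G - {{v,p}}" using ed by (simp add: insert_commute)
      have "x \<in> ?Y \<longleftrightarrow> y \<in> ?Y"
      proof
        assume "x \<in> ?Y"
        hence "conn (G - {{v,p}}) p x" by (simp add: side_def)
        hence "conn (G - {{v,p}}) p y" by (rule conn_trans[OF _ conn_edge[OF ed]])
        thus "y \<in> ?Y" by (simp add: side_def)
      next
        assume "y \<in> ?Y"
        hence "conn (G - {{v,p}}) p y" by (simp add: side_def)
        hence "conn (G - {{v,p}}) p x" by (rule conn_trans[OF _ conn_edge[OF ed2]])
        thus "x \<in> ?Y" by (simp add: side_def)
      qed
      thus ?thesis using xy by blast
    qed
  qed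
  have SS: "S = (S - ?Y) \<union> ?Y" using Ysub by blast
  have t': "is_tree ((S - ?Y) \<union> ?Y) G" using t SS by simp
  have disj: "(S - ?Y) \<inter> ?Y = {}" by blast
  have vSY: "v \<in> S - ?Y" using vS vY by blast
  show "is_tree (S - ?Y) (restr G (S - ?Y))"
    by (rule tree_part[OF disj vSY pY e cls t'])
  have cls2: "\<forall>e\<in>G. e \<subseteq> ?Y \<or> e \<subseteq> S - ?Y \<or> e = {p, v}" using cls_swap[OF cls] .
  have t'': "is_tree (?Y \<union> (S - ?Y)) G" using t SS by (simp add: Un_commute)
  have e2: "{p, v} \<in> G" using e by (simp add: insert_commute)
  show "is_tree ?Y (restr G ?Y)"
    by (rule tree_part[OF _ pY vSY e2 cls2 t'']) blast
qed



definition nbr :: "'a set set \<Rightarrow> 'a \<Rightarrow> 'a \<Rightarrow> 'a" where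
  "nbr G v x = (SOME u. {v, u} \<in> G \<and> x \<in> side G v u)"

definition part :: "'a set set \<Rightarrow> 'a \<Rightarrow> 'a \<Rightarrow> 'a set" where
  "part G v x = (if x = v then {} else side G v (nbr G v x))"

lemma nbr_spec:
  assumes t: "is_tree S G" "v \<in> S" "x \<in> S" "x \<noteq> v"
  shows "{v, nbr G v x} \<in> G \<and> x \<in> side G v (nbr G v x)"
  unfolding nbr_def by (rule someI_ex) (rule nb_exists[OF t])

lemma nbr_eq:
  assumes t: "is_tree S G" "{v, u} \<in> G" "x \<in> side G v u"
  shows "nbr G v x = u"
proof -
  have "{v, nbr G v x} \<in> G \<and> x \<in> side G v (nbr G v x)"
    unfolding nbr_def by (rule someI[of _ u]) (use t in blast)
  thus ?thesis using nb_unique[OF t(1)] t(2,3) by blast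
qed

lemma cnt_two: "x \<in> A \<Longrightarrow> y \<in> A \<Longrightarrow> (x = r1 \<and> y = r2) \<or> (x = r1 \<and> y = r3) \<or> (x = r2 \<and> y = r3) \<Longrightarrow> 2 \<le> cnt r1 r2 r3 A"
  unfolding cnt_def by auto

lemma T_decomp:
  assumes t: "is_tree S G" and r: "r1 \<in> S" "r2 \<in> S" "r3 \<in> S"
    and m: "median G S r1 r2 r3 v"
  defines "Y \<equiv> part G v r1" and "Z \<equiv> part G v r2"
  defines "X \<equiv> S - Y - Z"
  shows "r1 \<noteq> v \<Longrightarrow> {v, nbr G v r1} \<in> G \<and> r1 \<in> Y \<and> nbr G v r1 \<in> Y \<and> is_tree Y (restr G Y)"
    "r2 \<noteq> v \<Longrightarrow> {v, nbr G v r2} \<in> G \<and> r2 \<in> Z \<and> nbr G v r2 \<in> Z \<and> is_tree Z (restr G Z)"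
    "r1 = v \<Longrightarrow> Y = {}" "r2 = v \<Longrightarrow> Z = {}"
    "Y \<subseteq> S" "Z \<subseteq> S" "Y \<inter> Z = {}" "v \<in> X" "r3 \<in> X"
    "is_tree X (restr G X)"
    "G = restr G X \<union> restr G Y \<union> restr G Z \<union> (if r1 = v then {} else {{v, nbr G v r1}})
         \<union> (if r2 = v then {} else {{v, nbr G v r2}})"
proof -
  have vS: "v \<in> S" using m by (simp add: median_def)
  have mc: "cnt r1 r2 r3 (side G v u) \<le> 1" if "{v, u} \<in> G" for u
    using m that by (simp add: median_def)
  define p where "p = nbr G v r1"
  define s where "s = nbr G v r2"
  have P: "{v, p} \<in> G \<and> r1 \<in> side G v p" if "r1 \<noteq> v"
    unfolding p_def by (rule nbr_spec[OF t vS r(1) that])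
  have Sx: "{v, s} \<in> G \<and> r2 \<in> side G v s" if "r2 \<noteq> v"
    unfolding s_def by (rule nbr_spec[OF t vS r(2) that])
  have Yd: "Y = (if r1 = v then {} else side G v p)" unfolding Y_def part_def p_def by simp
  have Zd: "Z = (if r2 = v then {} else side G v s)" unfolding Z_def part_def s_def by simp
  show Y1: "r1 \<noteq> v \<Longrightarrow> {v, nbr G v r1} \<in> G \<and> r1 \<in> Y \<and> nbr G v r1 \<in> Y \<and> is_tree Y (restr G Y)"
    using P Yd split_side(3,4)[OF t] unfolding p_def by auto
  show Z1: "r2 \<noteq> v \<Longrightarrow> {v, nbr G v r2} \<in> G \<and> r2 \<in> Z \<and> nbr G v r2 \<in> Z \<and> is_tree Z (restr G Z)"
    using Sx Zd split_side(3,4)[OF t] unfolding s_def by auto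
  show "r1 = v \<Longrightarrow> Y = {}" "r2 = v \<Longrightarrow> Z = {}" using Yd Zd by auto
  show YS: "Y \<subseteq> S" using Yd P split_side(1)[OF t] by auto
  show ZS: "Z \<subseteq> S" using Zd Sx split_side(1)[OF t] by auto
  have vY: "v \<notin> Y" using Yd P split_side(2)[OF t] by auto
  have vZ: "v \<notin> Z" using Zd Sx split_side(2)[OF t] by auto
  have r3Y: "r3 \<notin> Y"
  proof
    assume h: "r3 \<in> Y"
    hence "r1 \<noteq> v" using Yd by auto
    hence "2 \<le> cnt r1 r2 r3 (side G v p)" using P h Yd cnt_two[of r1 "side G v p" r3] by auto
    thus False using mc P \<open>r1 \<noteq> v\<close> by fastforce
  qed
  have r3Z: "r3 \<notin> Z"
  proof
    assume h: "r3 \<in> Z"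
    hence "r2 \<noteq> v" using Zd by auto
    hence "2 \<le> cnt r1 r2 r3 (side G v s)" using Sx h Zd cnt_two[of r2 "side G v s" r3] by auto
    thus False using mc Sx \<open>r2 \<noteq> v\<close> by fastforce
  qed
  show YZ: "Y \<inter> Z = {}"
  proof (cases "r1 = v \<or> r2 = v")
    case True thus ?thesis using Yd Zd by auto
  next
    case False
    have "p \<noteq> s"
    proof
      assume "p = s"
      hence "2 \<le> cnt r1 r2 r3 (side G v p)" using P Sx False cnt_two[of r1 "side G v p" r2] by auto
      thus False using mc P False by fastforce
    qed
    thus ?thesis using side_nb_disj[OF t] P Sx False Yd Zd by auto
  qed
  show vX: "v \<in> X" unfolding X_def using vS vY vZ by blast
  show r3X: "r3 \<in> X" unfolding X_def using r(3) r3Y r3Z by blast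
  have clsY: "\<forall>e\<in>G. e \<subseteq> S - Y \<or> e \<subseteq> Y \<or> e = {v, p}" if "r1 \<noteq> v"
    using split_side(6)[OF t] P[OF that] Yd that by auto
  have clsZ: "\<forall>e\<in>G. e \<subseteq> S - Z \<or> e \<subseteq> Z \<or> e = {v, s}" if "r2 \<noteq> v"
    using split_side(6)[OF t] Sx[OF that] Zd that by auto
  show "is_tree X (restr G X)"
  proof (cases "r1 = v")
    case True
    note r1v = True
    show ?thesis
    proof (cases "r2 = v")
      case True
      hence "X = S" unfolding X_def using Yd Zd r1v by auto
      thus ?thesis using restr_self[OF t] t by simp
    next
      case False
      hence "X = S - side G v s" unfolding X_def using Yd Zd r1v by auto
      thus ?thesis using split_side(5)[OF t] Sx[OF False] by auto
    qed
  next
    case False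
    note r1v = False
    show ?thesis
    proof (cases "r2 = v")
      case True
      hence "X = S - side G v p" unfolding X_def using Yd Zd r1v by auto
      thus ?thesis using split_side(5)[OF t] P[OF r1v] by auto
    next
      case False
      note r2v = False
      define G1 where "G1 = restr G (S - Y)"
      have tG1: "is_tree (S - Y) G1" unfolding G1_def using split_side(5)[OF t] P[OF r1v] Yd r1v by auto
      have sZ: "s \<in> Z" using Zd split_side(3)[OF t] Sx[OF r2v] r2v by auto
      have disj: "X \<inter> Z = {}" unfolding X_def by blast
      have sSY: "s \<in> S - Y" using sZ ZS YZ by blast
      have vSY: "v \<in> S - Y" using vS vY by blast
      have br: "{v, s} \<in> G1" unfolding G1_def restr_def using Sx[OF r2v] sSY vSY by blast
      have cls: "\<forall>e\<in>G1. e \<subseteq> X \<or> e \<subseteq> Z \<or> e = {v, s}"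
      proof
        fix e assume e: "e \<in> G1"
        hence eG: "e \<in> G" and eSY: "e \<subseteq> S - Y" unfolding G1_def restr_def by auto
        from clsZ[OF r2v] eG have "e \<subseteq> S - Z \<or> e \<subseteq> Z \<or> e = {v, s}" by (rule bspec)
        thus "e \<subseteq> X \<or> e \<subseteq> Z \<or> e = {v, s}" using eSY unfolding X_def by blast
      qed
      have XZ: "X \<union> Z = S - Y" unfolding X_def using ZS YZ by blast
      have "is_tree X (restr G1 X)"
        by (rule tree_part[OF disj vX sZ br cls]) (use tG1 XZ in simp)
      moreover have "restr G1 X = restr G X" unfolding G1_def
        by (rule restr_restr) (auto simp: X_def)
      ultimately show ?thesis by simp
    qed
  qed
  show "G = restr G X \<union> restr G Y \<union> restr G Z \<union> (if r1 = v then {} else {{v, nbr G v r1}})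
         \<union> (if r2 = v then {} else {{v, nbr G v r2}})" (is "G = ?R")
  proof
    show "?R \<subseteq> G" using P Sx unfolding p_def s_def restr_def by auto
    show "G \<subseteq> ?R"
    proof
      fix e assume e: "e \<in> G"
      have eS: "e \<subseteq> S" using tree_sub[OF t e] by blast
      have A: "e \<subseteq> S - Y \<or> e \<subseteq> Y \<or> (r1 \<noteq> v \<and> e = {v, p})"
      proof (cases "r1 = v")
        case True thus ?thesis using eS Yd by auto
      next
        case False
        from clsY[OF False] e have "e \<subseteq> S - Y \<or> e \<subseteq> Y \<or> e = {v, p}" by (rule bspec)
        thus ?thesis using False by blast
      qed
      have B: "e \<subseteq> S - Z \<or> e \<subseteq> Z \<or> (r2 \<noteq> v \<and> e = {v, s})"
      proof (cases "r2 = v")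
        case True thus ?thesis using eS Zd by auto
      next
        case False
        from clsZ[OF False] e have "e \<subseteq> S - Z \<or> e \<subseteq> Z \<or> e = {v, s}" by (rule bspec)
        thus ?thesis using False by blast
      qed
      show "e \<in> ?R"
      proof (cases "e \<subseteq> Y")
        case True thus ?thesis using e by (simp add: restr_def)
      next
        case nY: False
        show ?thesis
        proof (cases "e \<subseteq> Z")
          case True thus ?thesis using e by (simp add: restr_def)
        next
          case nZ: False
          show ?thesis
          proof (cases "r1 \<noteq> v \<and> e = {v, p}")
            case True thus ?thesis unfolding p_def by simp
          next
            case n1: False
            show ?thesis
            proof (cases "r2 \<noteq> v \<and> e = {v, s}")
              case True thus ?thesis unfolding s_def by simp
            next
              case n2: False
              have "e \<subseteq> S - Y" using A nY n1 by blast
              moreover have "e \<subseteq> S - Z" using B nZ n2 by blast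
              ultimately have "e \<subseteq> X" unfolding X_def by blast
              thus ?thesis using e by (simp add: restr_def)
            qed
          qed
        qed
      qed
    qed
  qed
qed



lemma drt_facts:
  assumes "doubly_rooted_tree (Y, E1, R1)"
  shows "R1 = None \<Longrightarrow> Y = {} \<and> E1 = {}" "R1 = Some r \<Longrightarrow> fst r \<in> Y \<and> snd r \<in> Y \<and> is_tree Y E1"
  using assms unfolding doubly_rooted_tree_def by auto

lemma Phi_props:
  assumes tX: "is_tree X E" and aX: "a \<in> X" and bX: "b \<in> X"
    and dY: "doubly_rooted_tree (Y, E1, R1)" and dZ: "doubly_rooted_tree (Z, E2, R2)"
    and XY: "X \<inter> Y = {}" and XZ: "X \<inter> Z = {}" and YZ: "Y \<inter> Z = {}"
    and B1_def: "B1 = (case R1 of None \<Rightarrow> {} | Some r \<Rightarrow> {{a, snd r}})"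
    and B2_def: "B2 = (case R2 of None \<Rightarrow> {} | Some r \<Rightarrow> {{a, fst r}})"
    and G_def: "G = E \<union> E1 \<union> E2 \<union> B1 \<union> B2"
    and r1_def: "r1 = (case R1 of None \<Rightarrow> a | Some r \<Rightarrow> fst r)"
    and r2_def: "r2 = (case R2 of None \<Rightarrow> a | Some r \<Rightarrow> snd r)"
  shows "is_tree (X \<union> Y \<union> Z) G" "restr G X = E" "restr G Y = E1" "restr G Z = E2"
    "R1 = Some r \<Longrightarrow> side G a (snd r) = Y \<and> {a, snd r} \<in> G"
    "R2 = Some r \<Longrightarrow> side G a (fst r) = Z \<and> {a, fst r} \<in> G"
    "median G (X \<union> Y \<union> Z) r1 r2 b a"
proof -
  define H1 where "H1 = E \<union> E1 \<union> B1"
  define H2 where "H2 = E \<union> E2 \<union> B2"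
  have fs: "\<And>x y. snd (x, y) \<in> {x, y}" "\<And>x y. fst (x, y) \<in> {x, y}" by auto
  have H1d: "H1 = E \<union> E1 \<union> (case R1 of None \<Rightarrow> {} | Some r \<Rightarrow> {{a, snd r}})" using H1_def B1_def by simp
  have H2d: "H2 = E \<union> E2 \<union> (case R2 of None \<Rightarrow> {} | Some r \<Rightarrow> {{a, fst r}})" using H2_def B2_def by simp
  note g1 = glue_opt[OF tX aX dY XY fs(1) H1d]
  note g2 = glue_opt[OF tX aX dZ XZ fs(2) H2d]
  have aXY: "a \<in> X \<union> Y" "a \<in> X \<union> Z" using aX by auto
  have d1: "(X \<union> Y) \<inter> Z = {}" using XZ YZ by blast
  have d2: "(X \<union> Z) \<inter> Y = {}" using XY YZ by blast
  have Gd1: "G = H1 \<union> E2 \<union> (case R2 of None \<Rightarrow> {} | Some r \<Rightarrow> {{a, fst r}})"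
    unfolding G_def H1_def B2_def[symmetric] by blast
  have Gd2: "G = H2 \<union> E1 \<union> (case R1 of None \<Rightarrow> {} | Some r \<Rightarrow> {{a, snd r}})"
    unfolding G_def H2_def B1_def[symmetric] by blast
  note h1 = glue_opt[OF g1(1) aXY(1) dZ d1 fs(2) Gd1]
  note h2 = glue_opt[OF g2(1) aXY(2) dY d2 fs(1) Gd2]
  show t: "is_tree (X \<union> Y \<union> Z) G" using h1(1) .
  show rX: "restr G X = E"
    using restr_restr[of X "X \<union> Y" G] h1(2) g1(2) by simp
  show rY: "restr G Y = E1" using h2(3) .
  show rZ: "restr G Z = E2" using h1(3) .
  show s1: "R1 = Some r \<Longrightarrow> side G a (snd r) = Y \<and> {a, snd r} \<in> G" for r using h2(4) by blast
  show s2: "R2 = Some r \<Longrightarrow> side G a (fst r) = Z \<and> {a, fst r} \<in> G" for r using h1(4) by blast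
  have aY: "a \<notin> Y" and aZ: "a \<notin> Z" using aX XY XZ by auto
  have bY: "b \<notin> Y" and bZ: "b \<notin> Z" using bX XY XZ by auto
  have r1YA: "r1 \<in> Y \<or> r1 = a"
    using drt_facts(2)[OF dY] unfolding r1_def by (cases R1) auto
  have r2ZA: "r2 \<in> Z \<or> r2 = a"
    using drt_facts(2)[OF dZ] unfolding r2_def by (cases R2) auto
  have r1Z: "r1 \<notin> Z" using r1YA YZ aZ by blast
  have r2Y: "r2 \<notin> Y" using r2ZA YZ aY by blast
  have inner: "z \<in> side G u a" if ua: "{a, u} \<in> E" and z: "z \<in> Y \<or> z \<in> Z \<or> z = a" for u z
  proof -
    have uX: "u \<in> X" using tree_sub[OF tX ua] by blast
    have uaG: "{u, a} \<notin> E1" "{u, a} \<notin> E2"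
    proof -
      show "{u, a} \<notin> E1"
      proof
        assume "{u, a} \<in> E1"
        then obtain r where "R1 = Some r" using drt_facts(1)[OF dY] by (cases R1) auto
        hence "is_tree Y E1" using drt_facts(2)[OF dY] by blast
        thus False using tree_sub \<open>{u, a} \<in> E1\<close> aY by blast
      qed
      show "{u, a} \<notin> E2"
      proof
        assume "{u, a} \<in> E2"
        then obtain r where "R2 = Some r" using drt_facts(1)[OF dZ] by (cases R2) auto
        hence "is_tree Z E2" using drt_facts(2)[OF dZ] by blast
        thus False using tree_sub \<open>{u, a} \<in> E2\<close> aZ by blast
      qed
    qed
    have sub1: "E1 \<subseteq> G - {{u, a}}" using uaG unfolding G_def by blast
    have sub2: "E2 \<subseteq> G - {{u, a}}" using uaG unfolding G_def by blast
    have "conn (G - {{u, a}}) a z"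
    proof -
      consider "z = a" | "z \<in> Y" | "z \<in> Z" using z by blast
      then show ?thesis
      proof cases
        case 1 thus ?thesis by simp
      next
        case 2
        then obtain r where R: "R1 = Some r" using drt_facts(1)[OF dY] by (cases R1) auto
        have f: "fst r \<in> Y" "snd r \<in> Y" "is_tree Y E1" using drt_facts(2)[OF dY R] by auto
        have "{a, snd r} \<in> G" using s1[OF R] by blast
        moreover have "{a, snd r} \<noteq> {u, a}" using f(2) uX aX XY by (auto simp: doubleton_eq_iff)
        ultimately have "conn (G - {{u, a}}) a (snd r)" by (intro conn_edge) blast
        moreover have "conn E1 (snd r) z" by (rule tree_conn[OF f(3) f(2) 2])
        hence "conn (G - {{u, a}}) (snd r) z" by (rule conn_mono[OF sub1])
        ultimately show ?thesis by (rule conn_trans)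
      next
        case 3
        then obtain r where R: "R2 = Some r" using drt_facts(1)[OF dZ] by (cases R2) auto
        have f: "fst r \<in> Z" "snd r \<in> Z" "is_tree Z E2" using drt_facts(2)[OF dZ R] by auto
        have "{a, fst r} \<in> G" using s2[OF R] by blast
        moreover have "{a, fst r} \<noteq> {u, a}" using f(1) uX aX XZ by (auto simp: doubleton_eq_iff)
        ultimately have "conn (G - {{u, a}}) a (fst r)" by (intro conn_edge) blast
        moreover have "conn E2 (fst r) z" by (rule tree_conn[OF f(3) f(1) 3])
        hence "conn (G - {{u, a}}) (fst r) z" by (rule conn_mono[OF sub2])
        ultimately show ?thesis by (rule conn_trans)
      qed
    qed
    thus ?thesis by (simp add: side_def)
  qed
  show "median G (X \<union> Y \<union> Z) r1 r2 b a"
    unfolding median_def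
  proof (intro conjI allI impI)
    show "a \<in> X \<union> Y \<union> Z" using aX by blast
    fix u assume ua: "{a, u} \<in> G"
    have cases: "{a, u} \<in> E \<or> {a, u} \<in> E1 \<or> {a, u} \<in> E2 \<or> {a, u} \<in> B1 \<or> {a, u} \<in> B2"
      using ua unfolding G_def by blast
    have nE1: "{a, u} \<notin> E1"
    proof
      assume "{a, u} \<in> E1"
      then obtain r where "R1 = Some r" using drt_facts(1)[OF dY] by (cases R1) auto
      hence "is_tree Y E1" using drt_facts(2)[OF dY] by blast
      thus False using tree_sub \<open>{a, u} \<in> E1\<close> aY by blast
    qed
    have nE2: "{a, u} \<notin> E2"
    proof
      assume "{a, u} \<in> E2"
      then obtain r where "R2 = Some r" using drt_facts(1)[OF dZ] by (cases R2) auto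
      hence "is_tree Z E2" using drt_facts(2)[OF dZ] by blast
      thus False using tree_sub \<open>{a, u} \<in> E2\<close> aZ by blast
    qed
    show "cnt r1 r2 b (side G a u) \<le> 1"
    proof -
      consider "{a, u} \<in> E" | "{a, u} \<in> B1" | "{a, u} \<in> B2" using cases nE1 nE2 by blast
      then show ?thesis
      proof cases
        case 1
        have "r1 \<in> side G u a" using inner[OF 1] r1YA by blast
        moreover have "r2 \<in> side G u a" using inner[OF 1] r2ZA by blast
        moreover have "side G a u \<inter> side G u a = {}" by (rule side_disj[OF t ua])
        ultimately have "r1 \<notin> side G a u" "r2 \<notin> side G a u" by blast+
        thus ?thesis unfolding cnt_def by simp
      next
        case 2
        then obtain r where R: "R1 = Some r" and e: "{a, u} = {a, snd r}" unfolding B1_def by (cases R1) auto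
        have "snd r \<in> Y" using drt_facts(2)[OF dY R] by blast
        hence "u = snd r" using e aY by (auto simp: doubleton_eq_iff)
        hence "side G a u = Y" using s1[OF R] by simp
        thus ?thesis using r2Y bY unfolding cnt_def by simp
      next
        case 3
        then obtain r where R: "R2 = Some r" and e: "{a, u} = {a, fst r}" unfolding B2_def by (cases R2) auto
        have "fst r \<in> Z" using drt_facts(2)[OF dZ R] by blast
        hence "u = fst r" using e aZ by (auto simp: doubleton_eq_iff)
        hence "side G a u = Z" using s2[OF R] by simp
        thus ?thesis using r1Z bZ unfolding cnt_def by simp
      qed
    qed
  qed
qed



fun Phi :: "drt \<times> drt \<times> drt \<Rightarrow> nat set set \<times> nat \<times> nat \<times> nat" where
  "Phi ((X, E, R), (Y, E1, R1), (Z, E2, R2)) =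
    (E \<union> E1 \<union> E2 \<union> (case R1 of None \<Rightarrow> {} | Some r \<Rightarrow> {{fst (the R), snd r}})
       \<union> (case R2 of None \<Rightarrow> {} | Some r \<Rightarrow> {{fst (the R), fst r}}),
     (case R1 of None \<Rightarrow> fst (the R) | Some r \<Rightarrow> fst r),
     (case R2 of None \<Rightarrow> fst (the R) | Some r \<Rightarrow> snd r),
     snd (the R))"

definition medv :: "nat \<Rightarrow> nat set set \<Rightarrow> nat \<Rightarrow> nat \<Rightarrow> nat \<Rightarrow> nat" where
  "medv n G r1 r2 r3 = (SOME w. median G {1..n} r1 r2 r3 w)"

fun Psi :: "nat \<Rightarrow> nat set set \<times> nat \<times> nat \<times> nat \<Rightarrow> drt \<times> drt \<times> drt" where
  "Psi n (G, r1, r2, r3) = (let v = medv n G r1 r2 r3; Y = part G v r1; Z = part G v r2;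
     X = {1..n} - Y - Z in
     ((X, restr G X, Some (v, r3)),
      (if r1 = v then ({}, {}, None) else (Y, restr G Y, Some (r1, nbr G v r1))),
      (if r2 = v then ({}, {}, None) else (Z, restr G Z, Some (nbr G v r2, r2)))))"

lemma left_inv:
  assumes q: "q \<in> Q n"
  shows "Phi q \<in> T n \<and> Psi n (Phi q) = q"
proof -
  obtain X E R Y E1 R1 Z E2 R2 where qd: "q = ((X, E, R), (Y, E1, R1), (Z, E2, R2))"
    by (cases q) auto
  have dX: "doubly_rooted_tree (X, E, R)" and dY: "doubly_rooted_tree (Y, E1, R1)"
    and dZ: "doubly_rooted_tree (Z, E2, R2)" and comp: "is_composition X Y Z {1..n}" and Xne: "X \<noteq> {}"
    using q unfolding qd Q_def vertices_def by auto
  obtain a b where R: "R = Some (a, b)" and tX: "is_tree X E" and aX: "a \<in> X" and bX: "b \<in> X"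
    using dX Xne unfolding doubly_rooted_tree_def by auto
  have XY: "X \<inter> Y = {}" and XZ: "X \<inter> Z = {}" and YZ: "Y \<inter> Z = {}" and S: "X \<union> Y \<union> Z = {1..n}"
    using comp unfolding is_composition_def by auto
  define B1 where "B1 = (case R1 of None \<Rightarrow> {} | Some r \<Rightarrow> {{a, snd r}})"
  define B2 where "B2 = (case R2 of None \<Rightarrow> {} | Some r \<Rightarrow> {{a, fst r}})"
  define G where "G = E \<union> E1 \<union> E2 \<union> B1 \<union> B2"
  define r1 where "r1 = (case R1 of None \<Rightarrow> a | Some r \<Rightarrow> fst r)"
  define r2 where "r2 = (case R2 of None \<Rightarrow> a | Some r \<Rightarrow> snd r)"
  note P = Phi_props[OF tX aX bX dY dZ XY XZ YZ B1_def B2_def G_def r1_def r2_def]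
  have Phq: "Phi q = (G, r1, r2, b)"
    unfolding qd R G_def B1_def B2_def r1_def r2_def by (cases R1; cases R2) simp_all
  have r1S: "r1 \<in> X \<union> Y \<union> Z" using aX drt_facts(2)[OF dY] unfolding r1_def by (cases R1) auto
  have r2S: "r2 \<in> X \<union> Y \<union> Z" using aX drt_facts(2)[OF dZ] unfolding r2_def by (cases R2) auto
  have bS: "b \<in> X \<union> Y \<union> Z" using bX by blast
  have inT: "Phi q \<in> T n" unfolding Phq T_def using P(1) r1S r2S bS S by auto
  have med: "medv n G r1 r2 b = a"
  proof -
    have m: "median G {1..n} r1 r2 b a" using P(7) S by simp
    hence "median G {1..n} r1 r2 b (medv n G r1 r2 b)" unfolding medv_def by (rule someI)
    thus ?thesis using median_unique[OF P(1)[unfolded S] r1S[unfolded S] r2S[unfolded S] bS[unfolded S] _ m] by blast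
  qed
  have aY: "a \<notin> Y" and aZ: "a \<notin> Z" using aX XY XZ by auto
  have pY: "part G a r1 = Y"
  proof (cases R1)
    case None
    thus ?thesis using drt_facts(1)[OF dY] unfolding part_def r1_def by simp
  next
    case (Some r)
    have f: "fst r \<in> Y" using drt_facts(2)[OF dY Some] by blast
    have r1r: "r1 = fst r" unfolding r1_def Some by simp
    have "r1 \<noteq> a" using f aY r1r by auto
    moreover have "nbr G a r1 = snd r"
      by (rule nbr_eq[OF P(1)]) (use P(5)[OF Some] f r1r in auto)
    ultimately show ?thesis unfolding part_def using P(5)[OF Some] by simp
  qed
  have pZ: "part G a r2 = Z"
  proof (cases R2)
    case None
    thus ?thesis using drt_facts(1)[OF dZ] unfolding part_def r2_def by simp
  next
    case (Some r)
    have f: "snd r \<in> Z" using drt_facts(2)[OF dZ Some] by blast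
    have r2r: "r2 = snd r" unfolding r2_def Some by simp
    have "r2 \<noteq> a" using f aZ r2r by auto
    moreover have "nbr G a r2 = fst r"
      by (rule nbr_eq[OF P(1)]) (use P(6)[OF Some] f r2r in auto)
    ultimately show ?thesis unfolding part_def using P(6)[OF Some] by simp
  qed
  have Xe: "{1..n} - Y - Z = X" using S XY XZ by blast
  have D1: "(if r1 = a then ({}, {}, None) else (Y, restr G Y, Some (r1, nbr G a r1))) = (Y, E1, R1)"
  proof (cases R1)
    case None thus ?thesis using drt_facts(1)[OF dY] unfolding r1_def by simp
  next
    case (Some r)
    have f: "fst r \<in> Y" using drt_facts(2)[OF dY Some] by blast
    have r1r: "r1 = fst r" unfolding r1_def Some by simp
    have "nbr G a r1 = snd r"
      by (rule nbr_eq[OF P(1)]) (use P(5)[OF Some] f r1r in auto)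
    thus ?thesis using f aY r1r P(3) Some by (cases r) auto
  qed
  have D2: "(if r2 = a then ({}, {}, None) else (Z, restr G Z, Some (nbr G a r2, r2))) = (Z, E2, R2)"
  proof (cases R2)
    case None thus ?thesis using drt_facts(1)[OF dZ] unfolding r2_def by simp
  next
    case (Some r)
    have f: "snd r \<in> Z" using drt_facts(2)[OF dZ Some] by blast
    have r2r: "r2 = snd r" unfolding r2_def Some by simp
    have "nbr G a r2 = fst r"
      by (rule nbr_eq[OF P(1)]) (use P(6)[OF Some] f r2r in auto)
    thus ?thesis using f aZ r2r P(4) Some by (cases r) auto
  qed
  have "Psi n (Phi q) = q"
    unfolding Phq Psi.simps Let_def med pY pZ Xe D1 D2 using P(2) R qd by simp
  thus ?thesis using inT by blast
qed

lemma right_inv: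
  assumes tT: "t \<in> T n"
  shows "Psi n t \<in> Q n \<and> Phi (Psi n t) = t"
proof -
  obtain G r1 r2 r3 where td: "t = (G, r1, r2, r3)" by (cases t) auto
  let ?S = "{1..n::nat}"
  have t: "is_tree ?S G" and r: "r1 \<in> ?S" "r2 \<in> ?S" "r3 \<in> ?S" using tT unfolding td T_def by auto
  define v where "v = medv n G r1 r2 r3"
  have m: "median G ?S r1 r2 r3 v"
    unfolding v_def medv_def by (rule someI_ex) (rule median_exists[OF t r])
  define Y where "Y = part G v r1"
  define Z where "Z = part G v r2"
  define X where "X = ?S - Y - Z"
  note D = T_decomp[OF t r m, folded Y_def Z_def, folded X_def]
  have e0: "restr G {} = {}" using tree_sub[OF t] unfolding restr_def by blast
  have Ps: "Psi n t = ((X, restr G X, Some (v, r3)),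
      (if r1 = v then ({}, {}, None) else (Y, restr G Y, Some (r1, nbr G v r1))),
      (if r2 = v then ({}, {}, None) else (Z, restr G Z, Some (nbr G v r2, r2))))"
    unfolding td Psi.simps Let_def v_def[symmetric] Y_def[symmetric] Z_def[symmetric] X_def[symmetric] ..
  have inQ: "Psi n t \<in> Q n"
  proof -
    have d1: "doubly_rooted_tree (X, restr G X, Some (v, r3))"
      unfolding doubly_rooted_tree_def using D(8,9,10) by auto
    have d2: "doubly_rooted_tree (if r1 = v then ({}, {}, None) else (Y, restr G Y, Some (r1, nbr G v r1)))"
      unfolding doubly_rooted_tree_def using D(1) by auto
    have d3: "doubly_rooted_tree (if r2 = v then ({}, {}, None) else (Z, restr G Z, Some (nbr G v r2, r2)))"
      unfolding doubly_rooted_tree_def using D(2) by auto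
    have v2: "vertices (if r1 = v then ({}, {}, None) else (Y, restr G Y, Some (r1, nbr G v r1))) = Y"
      using D(3) by (auto simp: vertices_def)
    have v3: "vertices (if r2 = v then ({}, {}, None) else (Z, restr G Z, Some (nbr G v r2, r2))) = Z"
      using D(4) by (auto simp: vertices_def)
    have c: "is_composition X Y Z ?S" unfolding is_composition_def X_def using D(5,6,7) by blast
    show ?thesis unfolding Ps Q_def using d1 d2 d3 v2 v3 c D(8) by (auto simp: vertices_def)
  qed
  have "Phi (Psi n t) = t"
  proof -
    have "Phi (Psi n t) = (restr G X \<union> (if r1 = v then {} else restr G Y) \<union> (if r2 = v then {} else restr G Z)
       \<union> (if r1 = v then {} else {{v, nbr G v r1}}) \<union> (if r2 = v then {} else {{v, nbr G v r2}}),
       r1, r2, r3)"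
      unfolding Ps by (cases "r1 = v"; cases "r2 = v") auto
    also have "\<dots> = (G, r1, r2, r3)"
      using D(11) D(3,4) e0 by (cases "r1 = v"; cases "r2 = v") auto
    finally show ?thesis unfolding td .
  qed
  thus ?thesis using inQ by blast
qed

theorem theorem1:
  fixes n :: nat
  assumes "n \<ge> 1"
  shows "\<exists>f. bij_betw f (Q n) (T n)"
proof -
  have "bij_betw Phi (Q n) (T n)"
    by (rule bij_betw_byWitness[where f' = "Psi n"]) (use left_inv right_inv in blast)+
  thus ?thesis by blast
qed


end
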